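(* Let $f_0$ be a piecewise expanding unimodal map whose critical point $c$ is not periodic. Then: (A) For every $\eta>0$ there exists a neighborhood $W$ of $f_0$ in $\mathcal U^1$ (for the norm $|\cdot|_1$) such that $|J(f,v)-J(f_0,v)|\le\eta|v|_1$ for every $v\in\mathcal B^1(I)$ and every $f\in W$. (B) For every $v_0\in\mathcal B^0(I)$, the function $f\mapsto J(f,v_0)$ on $\mathcal U^1$ is continuous at $f=f_0$ with respect to the norm $|\cdot|_1$.
   Context: Let $I=[-1,1]$ and $c=0$. For $k\ge0$, $\mathcal B^k(I)$ is the Banach space of continuous $f:I\to\mathbb R$ that are $C^k$ on $[-1,0]$ and on $[0,1]$ with $f(1)=f(-1)$, normed by $|f|_k=\max\{|f|_{C^k[-1,0]},|f|_{C^k[0,1]}\}$, $|f|_{C^k(Q)}=\max_{0\le i\le k}\sup_Q|D^if|$. $\mathcal U^1$ is the set of piecewise expanding unimodal maps: $f\in\mathcal B^1(I)$ with $f(-1)=f(1)=-1$, $\inf_{x\in[-1,0]}Df(x)>1$, $\sup_{x\in[0,1]}Df(x)<-1$ and $f(0)\le1$. For bounded $v:I\to\mathbb R$: if $c$ is not periodic for $f$, $J(f,v)=\sum_{i=0}^\infty \frac{v(f^i(c))}{Df^i(f(c))}$; if $c$ has prime period $p$, $J(f,v)=\sum_{i=0}^{p-1}\frac{v(f^i(c))}{Df^i(f(c))}$. *)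

theory Defs
  imports "HOL-Analysis.Analysis"
begin

text \<open>The interval I = [-1,1], critical point c = 0. Functions are real => real;
only their values on I matter.\<close>

definition C1_on :: "real set \<Rightarrow> (real \<Rightarrow> real) \<Rightarrow> bool" where
  "C1_on S f \<longleftrightarrow> (\<exists>g. continuous_on S g \<and> (\<forall>x\<in>S. (f has_real_derivative g x) (at x within S)))"

definition Dm :: "(real \<Rightarrow> real) \<Rightarrow> real \<Rightarrow> real" where
  "Dm f x = (THE d. (f has_real_derivative d) (at x within {-1..0}))"

definition Dp :: "(real \<Rightarrow> real) \<Rightarrow> real \<Rightarrow> real" where
  "Dp f x = (THE d. (f has_real_derivative d) (at x within {0..1}))"

text \<open>Piecewise derivative Df (the convention at x = 0 is never used below).\<close>
definition Dpw :: "(real \<Rightarrow> real) \<Rightarrow> real \<Rightarrow> real" where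
  "Dpw f x = (if x \<le> 0 then Dm f x else Dp f x)"

definition B0 :: "(real \<Rightarrow> real) set" where
  "B0 = {f. continuous_on {-1..1} f \<and> f 1 = f (-1)}"

definition B1 :: "(real \<Rightarrow> real) set" where
  "B1 = {f. f \<in> B0 \<and> C1_on {-1..0} f \<and> C1_on {0..1} f}"

definition norm0 :: "(real \<Rightarrow> real) \<Rightarrow> real" where
  "norm0 f = Sup ((\<lambda>x. \<bar>f x\<bar>) ` {-1..1})"

definition norm1 :: "(real \<Rightarrow> real) \<Rightarrow> real" where
  "norm1 f = max (norm0 f)
      (max (Sup ((\<lambda>x. \<bar>Dm f x\<bar>) ` {-1..0})) (Sup ((\<lambda>x. \<bar>Dp f x\<bar>) ` {0..1})))"

definition U1 :: "(real \<Rightarrow> real) set" where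
  "U1 = {f. f \<in> B1 \<and> f (-1) = -1 \<and> f 1 = -1
           \<and> Inf (Dm f ` {-1..0}) > 1 \<and> Sup (Dp f ` {0..1}) < -1 \<and> f 0 \<le> 1}"

text \<open>Derivative of the i-th iterate along the orbit of x (chain rule).\<close>
definition Diter :: "(real \<Rightarrow> real) \<Rightarrow> nat \<Rightarrow> real \<Rightarrow> real" where
  "Diter f i x = (\<Prod>j<i. Dpw f ((f ^^ j) x))"

definition periodic_c :: "(real \<Rightarrow> real) \<Rightarrow> bool" where
  "periodic_c f \<longleftrightarrow> (\<exists>n>0. (f ^^ n) 0 = 0)"

definition J :: "(real \<Rightarrow> real) \<Rightarrow> (real \<Rightarrow> real) \<Rightarrow> real" where
  "J f v = (if periodic_c f
            then (let p = (LEAST n. n > 0 \<and> (f ^^ n) 0 = 0)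
                  in \<Sum>i<p. v ((f ^^ i) 0) / Diter f i (f 0))
            else (\<Sum>i. v ((f ^^ i) 0) / Diter f i (f 0)))"

end

theory Submission imports Defs begin

lemma at_Icc_nbot: "(a::real) < b \<Longrightarrow> x \<in> {a..b} \<Longrightarrow> at x within {a..b} \<noteq> bot"
  by (simp add: trivial_limit_within islimpt_Icc)

lemma THE_der:
  assumes "(f has_real_derivative d) (at x within {a..b})" "(a::real) < b" "x \<in> {a..b}"
  shows "(THE d. (f has_real_derivative d) (at x within {a..b})) = d"
proof (rule the_equality)
  show "(f has_real_derivative d) (at x within {a..b})" by fact
  fix d' assume "(f has_real_derivative d') (at x within {a..b})"
  then show "d' = d" using has_field_derivative_unique assms at_Icc_nbot by blast
qed

lemma C1_der:
  assumes "C1_on {a..b} f" "(a::real) < b"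
  shows "\<forall>x\<in>{a..b}. (f has_real_derivative (THE d. (f has_real_derivative d) (at x within {a..b}))) (at x within {a..b})"
    "continuous_on {a..b} (\<lambda>x. THE d. (f has_real_derivative d) (at x within {a..b}))"
proof -
  obtain g where g: "continuous_on {a..b} g" "\<forall>x\<in>{a..b}. (f has_real_derivative g x) (at x within {a..b})"
    using assms(1) unfolding C1_on_def by blast
  have e: "\<forall>x\<in>{a..b}. (THE d. (f has_real_derivative d) (at x within {a..b})) = g x"
    using g(2) THE_der[OF _ assms(2)] by blast
  show "\<forall>x\<in>{a..b}. (f has_real_derivative (THE d. (f has_real_derivative d) (at x within {a..b}))) (at x within {a..b})"
    using e g by simp
  show "continuous_on {a..b} (\<lambda>x. THE d. (f has_real_derivative d) (at x within {a..b}))"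
    using continuous_on_eq[OF g(1), of "\<lambda>x. THE d. (f has_real_derivative d) (at x within {a..b})"] e by simp
qed

lemma Dm_props:
  assumes "f \<in> B1"
  shows "\<forall>x\<in>{-1..0}. (f has_real_derivative Dm f x) (at x within {-1..0})" "continuous_on {-1..0} (Dm f)"
  using C1_der[of "-1" 0 f] assms unfolding Dm_def[abs_def] B1_def by auto

lemma Dp_props:
  assumes "f \<in> B1"
  shows "\<forall>x\<in>{0..1}. (f has_real_derivative Dp f x) (at x within {0..1})" "continuous_on {0..1} (Dp f)"
  using C1_der[of 0 1 f] assms unfolding Dp_def[abs_def] B1_def by auto

lemma C1_diff: "C1_on S f \<Longrightarrow> C1_on S g \<Longrightarrow> C1_on S (\<lambda>x. f x - g x)"
proof -
  assume "C1_on S f" "C1_on S g"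
  then obtain a b where "continuous_on S a" "\<forall>x\<in>S. (f has_real_derivative a x) (at x within S)"
    "continuous_on S b" "\<forall>x\<in>S. (g has_real_derivative b x) (at x within S)"
    unfolding C1_on_def by blast
  then show ?thesis unfolding C1_on_def
    by (intro exI[of _ "\<lambda>x. a x - b x"]) (auto intro!: continuous_on_diff DERIV_diff)
qed

lemma B1_diff: "f \<in> B1 \<Longrightarrow> g \<in> B1 \<Longrightarrow> (\<lambda>x. f x - g x) \<in> B1"
  unfolding B1_def B0_def by (auto intro!: continuous_on_diff C1_diff)

lemma Dm_diff: assumes "f \<in> B1" "g \<in> B1" "x \<in> {-1..0}"
  shows "Dm (\<lambda>x. f x - g x) x = Dm f x - Dm g x"
proof -
  have "((\<lambda>x. f x - g x) has_real_derivative Dm f x - Dm g x) (at x within {-1..0})"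
    using Dm_props(1)[OF assms(1)] Dm_props(1)[OF assms(2)] assms(3) by (intro DERIV_diff) auto
  then show ?thesis unfolding Dm_def[of "\<lambda>x. f x - g x"] using assms(3) by (intro THE_der) auto
qed

lemma Dp_diff: assumes "f \<in> B1" "g \<in> B1" "x \<in> {0..1}"
  shows "Dp (\<lambda>x. f x - g x) x = Dp f x - Dp g x"
proof -
  have "((\<lambda>x. f x - g x) has_real_derivative Dp f x - Dp g x) (at x within {0..1})"
    using Dp_props(1)[OF assms(1)] Dp_props(1)[OF assms(2)] assms(3) by (intro DERIV_diff) auto
  then show ?thesis unfolding Dp_def[of "\<lambda>x. f x - g x"] using assms(3) by (intro THE_der) auto
qed

lemma bdd_abs: "continuous_on S (g::_\<Rightarrow>real) \<Longrightarrow> compact S \<Longrightarrow> bdd_above ((\<lambda>x. \<bar>g x\<bar>) ` S)"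
proof -
  assume a: "continuous_on S g" "compact S"
  have "continuous_on S (\<lambda>x. \<bar>g x\<bar>)" using a(1) by (rule continuous_on_rabs)
  then show ?thesis using a by (intro bounded_imp_bdd_above compact_imp_bounded compact_continuous_image)
qed

lemma bdd_b: "continuous_on S (g::_\<Rightarrow>real) \<Longrightarrow> compact S \<Longrightarrow> bdd_below (g ` S)"
  by (intro bounded_imp_bdd_below compact_imp_bounded compact_continuous_image)

lemma bdd_a: "continuous_on S (g::_\<Rightarrow>real) \<Longrightarrow> compact S \<Longrightarrow> bdd_above (g ` S)"
  by (intro bounded_imp_bdd_above compact_imp_bounded compact_continuous_image)

lemma norm0_bound: "h \<in> B0 \<Longrightarrow> x \<in> {-1..1} \<Longrightarrow> \<bar>h x\<bar> \<le> norm0 h"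
  unfolding norm0_def B0_def by (rule cSup_upper) (auto intro!: bdd_abs)

lemma norm1_bound0: "h \<in> B1 \<Longrightarrow> x \<in> {-1..1} \<Longrightarrow> \<bar>h x\<bar> \<le> norm1 h"
  using norm0_bound[of h x] unfolding norm1_def B1_def by auto

lemma norm1_boundm: "h \<in> B1 \<Longrightarrow> x \<in> {-1..0} \<Longrightarrow> \<bar>Dm h x\<bar> \<le> norm1 h"
proof -
  assume a: "h \<in> B1" "x \<in> {-1..0}"
  have "\<bar>Dm h x\<bar> \<le> Sup ((\<lambda>x. \<bar>Dm h x\<bar>) ` {-1..0})"
    using a Dm_props(2)[OF a(1)] by (intro cSup_upper bdd_abs) auto
  then show ?thesis unfolding norm1_def by auto
qed

lemma norm1_boundp: "h \<in> B1 \<Longrightarrow> x \<in> {0..1} \<Longrightarrow> \<bar>Dp h x\<bar> \<le> norm1 h"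
proof -
  assume a: "h \<in> B1" "x \<in> {0..1}"
  have "\<bar>Dp h x\<bar> \<le> Sup ((\<lambda>x. \<bar>Dp h x\<bar>) ` {0..1})"
    using a Dp_props(2)[OF a(1)] by (intro cSup_upper bdd_abs) auto
  then show ?thesis unfolding norm1_def by auto
qed

lemma lip_v:
  assumes v: "v \<in> B1" and x: "x \<in> {-1..1}" and y: "y \<in> {-1..1}"
  shows "\<bar>v x - v y\<bar> \<le> norm1 v * \<bar>x - y\<bar>"
proof -
  have L: "\<bar>v x - v y\<bar> \<le> norm1 v * \<bar>x - y\<bar>" if "x \<in> {-1..0}" "y \<in> {-1..0}" for x y
    using field_differentiable_bound[of "{-1..0}" v "Dm v" "norm1 v" x y] Dm_props[OF v]
      norm1_boundm[OF v] that by (auto simp: convex_real_interval)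
  have R: "\<bar>v x - v y\<bar> \<le> norm1 v * \<bar>x - y\<bar>" if "x \<in> {0..1}" "y \<in> {0..1}" for x y
    using field_differentiable_bound[of "{0..1}" v "Dp v" "norm1 v" x y] Dp_props[OF v]
      norm1_boundp[OF v] that by (auto simp: convex_real_interval)
  show ?thesis
  proof (cases "x \<le> 0")
    case True
    show ?thesis
    proof (cases "y \<le> 0")
      case True then show ?thesis using L \<open>x \<le> 0\<close> x y by auto
    next
      case False
      have "\<bar>v x - v 0\<bar> \<le> norm1 v * \<bar>x - 0\<bar>" using L[of x 0] \<open>x \<le> 0\<close> x by auto
      moreover have "\<bar>v 0 - v y\<bar> \<le> norm1 v * \<bar>0 - y\<bar>" using R[of 0 y] False y by auto
      ultimately have "\<bar>v x - v y\<bar> \<le> norm1 v * \<bar>x - 0\<bar> + norm1 v * \<bar>0 - y\<bar>" by linarith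
      also have "\<dots> = norm1 v * \<bar>x - y\<bar>" using \<open>x \<le> 0\<close> False by (simp add: algebra_simps)
      finally show ?thesis .
    qed
  next
    case xF: False
    show ?thesis
    proof (cases "y \<le> 0")
      case True
      have "\<bar>v x - v 0\<bar> \<le> norm1 v * \<bar>x - 0\<bar>" using R[of x 0] xF x by auto
      moreover have "\<bar>v 0 - v y\<bar> \<le> norm1 v * \<bar>0 - y\<bar>" using L[of 0 y] True y by auto
      ultimately have "\<bar>v x - v y\<bar> \<le> norm1 v * \<bar>x - 0\<bar> + norm1 v * \<bar>0 - y\<bar>" by linarith
      also have "\<dots> = norm1 v * \<bar>x - y\<bar>" using xF True by (simp add: algebra_simps)
      finally show ?thesis .
    next
      case False then show ?thesis using R xF x y by auto
    qed
  qed
qed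

lemma mono_piece:
  assumes d: "\<forall>x\<in>{a..b}. (f has_real_derivative D x) (at x within {a..b})"
    and p: "\<forall>x\<in>{a..b}. D x \<ge> 0" and "a \<le> u" "u \<le> v" "v \<le> (b::real)"
  shows "f u \<le> f v"
proof -
  have "(f has_derivative (\<lambda>h. D x * h)) (at x within {u..v})" if "u \<le> x" "x \<le> v" for x
  proof -
    have "(f has_real_derivative D x) (at x within {u..v})"
    proof (rule DERIV_subset)
      show "(f has_real_derivative D x) (at x within {a..b})" using d that assms(3,5) by simp
      show "{u..v} \<subseteq> {a..b}" using assms(3,5) by simp
    qed
    then show ?thesis by (simp add: has_field_derivative_def)
  qed
  from mvt_very_simple[OF \<open>u \<le> v\<close>, of f "\<lambda>x h. D x * h", OF this]
  obtain x where "x \<in> {u..v}" "f v - f u = D x * (v - u)" by auto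
  moreover have "D x \<ge> 0" using p \<open>x \<in> {u..v}\<close> assms(3,5) by auto
  moreover have "0 \<le> D x * (v - u)" using \<open>D x \<ge> 0\<close> \<open>u \<le> v\<close> by simp
  ultimately show ?thesis by linarith
qed

lemma antimono_piece:
  assumes d: "\<forall>x\<in>{a..b}. (f has_real_derivative D x) (at x within {a..b})"
    and p: "\<forall>x\<in>{a..b}. D x \<le> 0" and "a \<le> u" "u \<le> v" "v \<le> (b::real)"
  shows "f v \<le> f u"
proof -
  have "\<forall>x\<in>{a..b}. ((\<lambda>x. - f x) has_real_derivative - D x) (at x within {a..b})"
    using d by (auto intro: DERIV_minus)
  from mono_piece[OF this _ assms(3-5)] p show ?thesis by auto
qed

lemma U1_B1: "f \<in> U1 \<Longrightarrow> f \<in> B1" unfolding U1_def by auto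

lemma U1_Dm: assumes "f \<in> U1" "x \<in> {-1..0}" shows "Dm f x > 1"
proof -
  have "Inf (Dm f ` {-1..0}) \<le> Dm f x"
    using assms Dm_props(2)[OF U1_B1[OF assms(1)]] by (intro cInf_lower bdd_b) auto
  then show ?thesis using assms(1) unfolding U1_def by auto
qed

lemma U1_Dp: assumes "f \<in> U1" "x \<in> {0..1}" shows "Dp f x < -1"
proof -
  have "Dp f x \<le> Sup (Dp f ` {0..1})"
    using assms Dp_props(2)[OF U1_B1[OF assms(1)]] by (intro cSup_upper bdd_a) auto
  then show ?thesis using assms(1) unfolding U1_def by auto
qed

lemma U1_maps: assumes f: "f \<in> U1" and x: "x \<in> {-1..1}" shows "f x \<in> {-1..1}"
proof -
  have fv: "f (-1) = -1" "f 1 = -1" "f 0 \<le> 1" using f unfolding U1_def by auto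
  have dm: "\<forall>x\<in>{-1..0}. Dm f x \<ge> 0"
  proof
    fix x assume "x \<in> {-1..(0::real)}" then have "Dm f x > 1" by (rule U1_Dm[OF f])
    then show "Dm f x \<ge> 0" by simp
  qed
  have dp: "\<forall>x\<in>{0..1}. Dp f x \<le> 0"
  proof
    fix x assume "x \<in> {0..(1::real)}" then have "Dp f x < -1" by (rule U1_Dp[OF f])
    then show "Dp f x \<le> 0" by simp
  qed
  note Dm_props(1)[OF U1_B1[OF f]] Dp_props(1)[OF U1_B1[OF f]]
  show ?thesis
  proof (cases "x \<le> 0")
    case True
    have "f (-1) \<le> f x" "f x \<le> f 0"
      using mono_piece[OF Dm_props(1)[OF U1_B1[OF f]] dm] True x by auto
    then show ?thesis using fv by auto
  next
    case False
    have "f x \<le> f 0" "f 1 \<le> f x"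
      using antimono_piece[OF Dp_props(1)[OF U1_B1[OF f]] dp] False x by auto
    then show ?thesis using fv by auto
  qed
qed

lemma orbit_I: "f \<in> U1 \<Longrightarrow> (f ^^ n) 0 \<in> {-1..1}"
proof (induction n)
  case (Suc n) then show ?case using U1_maps[of f "(f ^^ n) 0"] by simp
qed simp


definition Fl :: "(real \<Rightarrow> real) \<Rightarrow> (real \<Rightarrow> real) filter" where
  "Fl f0 = (INF d\<in>{0<..}. principal {f\<in>U1. norm1 (\<lambda>x. f x - f0 x) < (d::real)})"

lemma eventually_Fl:
  "eventually P (Fl f0) \<longleftrightarrow> (\<exists>d>0. \<forall>f\<in>U1. norm1 (\<lambda>x. f x - f0 x) < d \<longrightarrow> P f)"
proof -
  have "eventually P (Fl f0) \<longleftrightarrow> (\<exists>d\<in>{0<..}. eventually P (principal {f\<in>U1. norm1 (\<lambda>x. f x - f0 x) < (d::real)}))"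
    unfolding Fl_def
  proof (rule eventually_INF_base)
    show "{0<..} \<noteq> ({}::real set)" by auto
    fix a b :: real assume "a \<in> {0<..}" "b \<in> {0<..}"
    then show "\<exists>x\<in>{0<..}. principal {f \<in> U1. norm1 (\<lambda>x. f x - f0 x) < x}
           \<le> inf (principal {f \<in> U1. norm1 (\<lambda>x. f x - f0 x) < a}) (principal {f \<in> U1. norm1 (\<lambda>x. f x - f0 x) < b})"
      by (intro bexI[of _ "min a b"]) auto
  qed
  then show ?thesis by (auto simp: eventually_principal)
qed

lemma Diter_alt: "Diter f i (f 0) = (\<Prod>j<i. Dpw f ((f ^^ Suc j) 0))"
  unfolding Diter_def by (simp add: funpow_swap1)

lemma Diter_bound:
  assumes f: "f \<in> U1" and l: "lam > 0" and b: "\<forall>y\<in>{-1..1}. \<bar>Dpw f y\<bar> \<ge> lam"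
  shows "\<bar>Diter f i (f 0)\<bar> \<ge> lam ^ i"
proof -
  have "lam ^ i = (\<Prod>j<i. lam)" by simp
  also have "\<dots> \<le> (\<Prod>j<i. \<bar>Dpw f ((f ^^ Suc j) 0)\<bar>)"
  proof (rule prod_mono)
    fix j assume "j \<in> {..<i}"
    have "(f ^^ Suc j) 0 \<in> {-1..1}" by (rule orbit_I[OF f])
    then have "lam \<le> \<bar>Dpw f ((f ^^ Suc j) 0)\<bar>" using b by blast
    then show "0 \<le> lam \<and> lam \<le> \<bar>Dpw f ((f ^^ Suc j) 0)\<bar>" using l by simp
  qed
  also have "\<dots> = \<bar>Diter f i (f 0)\<bar>" unfolding Diter_alt by (simp add: abs_prod)
  finally show ?thesis .
qed

lemma term_bound:
  assumes f: "f \<in> U1" and l: "lam > 0" and b: "\<forall>y\<in>{-1..1}. \<bar>Dpw f y\<bar> \<ge> lam"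
    and v: "\<forall>y\<in>{-1..1}. \<bar>v y\<bar> \<le> M"
  shows "\<bar>v ((f ^^ i) 0) / Diter f i (f 0)\<bar> \<le> M * (1/lam) ^ i"
proof -
  have D: "\<bar>Diter f i (f 0)\<bar> \<ge> lam ^ i" by (rule Diter_bound[OF f l b])
  have M: "\<bar>v ((f ^^ i) 0)\<bar> \<le> M" using v orbit_I[OF f] by auto
  have "\<bar>v ((f ^^ i) 0) / Diter f i (f 0)\<bar> = \<bar>v ((f ^^ i) 0)\<bar> / \<bar>Diter f i (f 0)\<bar>" by simp
  also have "\<dots> \<le> M / lam ^ i"
    using M D l by (intro frac_le) auto
  also have "\<dots> = M * (1/lam) ^ i" by (simp add: power_one_over)
  finally show ?thesis .
qed

lemma tail_sum:
  fixes t :: "nat \<Rightarrow> real"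
  assumes b: "\<forall>i. \<bar>t i\<bar> \<le> M * r ^ i" and r: "0 \<le> r" "r < 1"
  shows "\<bar>suminf t - (\<Sum>i<K. t i)\<bar> \<le> M * r ^ K / (1 - r)"
proof -
  have sg: "summable (\<lambda>i. M * r ^ i)" using r by (intro summable_mult summable_geometric) auto
  have st: "summable t" using b by (intro summable_comparison_test[OF _ sg]) auto
  have sg2: "summable (\<lambda>n. M * r ^ (n + K))"
    using sg by (subst summable_iff_shift) simp
  have "suminf t - (\<Sum>i<K. t i) = (\<Sum>n. t (n + K))" using suminf_split_initial_segment[OF st, of K] by simp
  also have "\<bar>\<dots>\<bar> \<le> (\<Sum>n. \<bar>t (n + K)\<bar>)"
  proof -
    have "summable (\<lambda>n. \<bar>t (n + K)\<bar>)" using b by (intro summable_comparison_test[OF _ sg2]) auto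
    then show ?thesis using summable_norm[of "\<lambda>n. t (n + K)"] by simp
  qed
  also have "\<dots> \<le> (\<Sum>n. M * r ^ (n + K))"
    using b sg2 by (intro suminf_le) (auto intro: summable_comparison_test[OF _ sg2])
  also have "\<dots> = (\<Sum>n. (M * r ^ K) * r ^ n)" by (simp add: power_add mult_ac)
  also have "\<dots> = M * r ^ K * (1 / (1 - r))"
    using r by (subst suminf_mult) (auto simp: suminf_geometric)
  finally show ?thesis by simp
qed

lemma tail_J:
  fixes t :: "nat \<Rightarrow> real"
  assumes b: "\<forall>i. \<bar>t i\<bar> \<le> M * r ^ i" and r: "0 \<le> r" "r < 1"
    and S: "S = (if P then (\<Sum>i<p. t i) else suminf t)" and pK: "P \<longrightarrow> K \<le> p"
  shows "\<bar>S - (\<Sum>i<K. t i)\<bar> \<le> M * r ^ K / (1 - r)"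
proof (cases P)
  case False then show ?thesis using S tail_sum[OF b r] by simp
next
  case True
  define t' where "t' i = (if i < p then t i else 0)" for i
  have M: "M \<ge> 0" using b[rule_format, of 0] by simp
  have b': "\<forall>i. \<bar>t' i\<bar> \<le> M * r ^ i" using b M r unfolding t'_def by auto
  have "suminf t' = (\<Sum>i<p. t' i)" by (rule suminf_finite) (auto simp: t'_def)
  also have "\<dots> = (\<Sum>i<p. t i)" by (simp add: t'_def)
  finally have e1: "suminf t' = (\<Sum>i<p. t i)" .
  have e2: "(\<Sum>i<K. t' i) = (\<Sum>i<K. t i)" using pK True by (auto simp: t'_def)
  show ?thesis using tail_sum[OF b' r, of K] e1 e2 S True by simp
qed

lemma J_eq: "J f v = (if periodic_c f then (\<Sum>i<(LEAST n. n > 0 \<and> (f ^^ n) 0 = 0). v ((f ^^ i) 0) / Diter f i (f 0))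
   else (\<Sum>i. v ((f ^^ i) 0) / Diter f i (f 0)))"
  by (simp add: J_def Let_def)

lemma per_ge:
  assumes "periodic_c f" "\<forall>n. 0 < n \<and> n < K \<longrightarrow> (f ^^ n) 0 \<noteq> 0"
  shows "K \<le> (LEAST n. n > 0 \<and> (f ^^ n) 0 = 0)"
proof -
  have "\<exists>n. n > 0 \<and> (f ^^ n) 0 = 0" using assms(1) unfolding periodic_c_def by auto
  from LeastI_ex[OF this] have "(LEAST n. n > 0 \<and> (f ^^ n) 0 = 0) > 0"
    "(f ^^ (LEAST n. n > 0 \<and> (f ^^ n) 0 = 0)) 0 = 0" by auto
  then show ?thesis using assms(2) by (meson not_le)
qed


context
  fixes f0 :: "real \<Rightarrow> real"
  assumes f0U: "f0 \<in> U1"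
begin

abbreviation "NN f \<equiv> norm1 (\<lambda>x. f x - f0 x)"

lemma ev_U1: "eventually (\<lambda>f. f \<in> U1) (Fl f0)"
  unfolding eventually_Fl by (intro exI[of _ 1]) auto

lemma NN_nonneg: "f \<in> U1 \<Longrightarrow> NN f \<ge> 0"
  using norm1_bound0[OF B1_diff[OF U1_B1 U1_B1[OF f0U]], of f 0] by auto

lemma NN_tendsto: "(NN \<longlongrightarrow> 0) (Fl f0)"
proof (rule tendstoI)
  fix e :: real assume "e > 0"
  then show "eventually (\<lambda>f. dist (NN f) 0 < e) (Fl f0)"
    unfolding eventually_Fl using NN_nonneg by (intro exI[of _ e]) auto
qed

lemma orbit_tendsto: "((\<lambda>f. (f ^^ n) 0) \<longlongrightarrow> (f0 ^^ n) 0) (Fl f0)"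
proof (induction n)
  case 0 then show ?case by simp
next
  case (Suc n)
  have A: "((\<lambda>f. f ((f ^^ n) 0) - f0 ((f ^^ n) 0)) \<longlongrightarrow> 0) (Fl f0)"
  proof (rule Lim_null_comparison[OF _ NN_tendsto])
    show "eventually (\<lambda>f. norm (f ((f ^^ n) 0) - f0 ((f ^^ n) 0)) \<le> NN f) (Fl f0)"
      using ev_U1
    proof (rule eventually_mono)
      fix f assume f: "f \<in> U1"
      show "norm (f ((f ^^ n) 0) - f0 ((f ^^ n) 0)) \<le> NN f"
        using norm1_bound0[OF B1_diff[OF U1_B1[OF f] U1_B1[OF f0U]] orbit_I[OF f, of n]] by simp
    qed
  qed
  have c0: "continuous_on {-1..1} f0" using f0U unfolding U1_def B1_def B0_def by auto
  have B: "((\<lambda>f. f0 ((f ^^ n) 0)) \<longlongrightarrow> f0 ((f0 ^^ n) 0)) (Fl f0)"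
  proof (rule continuous_on_tendsto_compose[OF c0 Suc.IH])
    show "(f0 ^^ n) 0 \<in> {-1..1}" by (rule orbit_I[OF f0U])
    show "eventually (\<lambda>f. (f ^^ n) 0 \<in> {-1..1}) (Fl f0)"
      using ev_U1 by (rule eventually_mono) (rule orbit_I)
  qed
  from tendsto_add[OF A B] show ?case by simp
qed

lemma Dpw_tendsto:
  assumes ne: "(f0 ^^ j) 0 \<noteq> 0"
  shows "((\<lambda>f. Dpw f ((f ^^ j) 0)) \<longlongrightarrow> Dpw f0 ((f0 ^^ j) 0)) (Fl f0)"
proof (cases "(f0 ^^ j) 0 < 0")
  case True
  have ev1: "eventually (\<lambda>f. f \<in> U1 \<and> (f ^^ j) 0 < 0) (Fl f0)"
    using ev_U1 order_tendstoD(2)[OF orbit_tendsto True] by (rule eventually_conj)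
  have A: "((\<lambda>f. Dm f ((f ^^ j) 0) - Dm f0 ((f ^^ j) 0)) \<longlongrightarrow> 0) (Fl f0)"
  proof (rule Lim_null_comparison[OF _ NN_tendsto])
    show "eventually (\<lambda>f. norm (Dm f ((f ^^ j) 0) - Dm f0 ((f ^^ j) 0)) \<le> NN f) (Fl f0)"
      using ev1
    proof (rule eventually_mono)
      fix f assume f: "f \<in> U1 \<and> (f ^^ j) 0 < 0"
      then have y: "(f ^^ j) 0 \<in> {-1..0}" using orbit_I[of f j] by auto
      show "norm (Dm f ((f ^^ j) 0) - Dm f0 ((f ^^ j) 0)) \<le> NN f"
        using norm1_boundm[OF B1_diff[OF U1_B1 U1_B1[OF f0U]] y] Dm_diff[OF U1_B1 U1_B1[OF f0U] y] f
        by simp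
    qed
  qed
  have B: "((\<lambda>f. Dm f0 ((f ^^ j) 0)) \<longlongrightarrow> Dm f0 ((f0 ^^ j) 0)) (Fl f0)"
  proof (rule continuous_on_tendsto_compose[OF Dm_props(2)[OF U1_B1[OF f0U]] orbit_tendsto])
    show "(f0 ^^ j) 0 \<in> {-1..0}" using orbit_I[OF f0U, of j] True by auto
    show "eventually (\<lambda>f. (f ^^ j) 0 \<in> {-1..0}) (Fl f0)"
      using ev1 by (rule eventually_mono) (use orbit_I in auto)
  qed
  have C: "((\<lambda>f. Dm f ((f ^^ j) 0)) \<longlongrightarrow> Dm f0 ((f0 ^^ j) 0)) (Fl f0)"
    using tendsto_add[OF A B] by simp
  have "((\<lambda>f. Dpw f ((f ^^ j) 0)) \<longlongrightarrow> Dm f0 ((f0 ^^ j) 0)) (Fl f0)"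
  proof (subst tendsto_cong)
    show "eventually (\<lambda>f. Dpw f ((f ^^ j) 0) = Dm f ((f ^^ j) 0)) (Fl f0)"
      using ev1 by (rule eventually_mono) (simp add: Dpw_def)
  qed (rule C)
  then show ?thesis using True by (simp add: Dpw_def)
next
  case False
  then have pos: "(f0 ^^ j) 0 > 0" using ne by auto
  have ev1: "eventually (\<lambda>f. f \<in> U1 \<and> (f ^^ j) 0 > 0) (Fl f0)"
    using ev_U1 order_tendstoD(1)[OF orbit_tendsto pos] by (rule eventually_conj)
  have A: "((\<lambda>f. Dp f ((f ^^ j) 0) - Dp f0 ((f ^^ j) 0)) \<longlongrightarrow> 0) (Fl f0)"
  proof (rule Lim_null_comparison[OF _ NN_tendsto])
    show "eventually (\<lambda>f. norm (Dp f ((f ^^ j) 0) - Dp f0 ((f ^^ j) 0)) \<le> NN f) (Fl f0)"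
      using ev1
    proof (rule eventually_mono)
      fix f assume f: "f \<in> U1 \<and> (f ^^ j) 0 > 0"
      then have y: "(f ^^ j) 0 \<in> {0..1}" using orbit_I[of f j] by auto
      show "norm (Dp f ((f ^^ j) 0) - Dp f0 ((f ^^ j) 0)) \<le> NN f"
        using norm1_boundp[OF B1_diff[OF U1_B1 U1_B1[OF f0U]] y] Dp_diff[OF U1_B1 U1_B1[OF f0U] y] f
        by simp
    qed
  qed
  have B: "((\<lambda>f. Dp f0 ((f ^^ j) 0)) \<longlongrightarrow> Dp f0 ((f0 ^^ j) 0)) (Fl f0)"
  proof (rule continuous_on_tendsto_compose[OF Dp_props(2)[OF U1_B1[OF f0U]] orbit_tendsto])
    show "(f0 ^^ j) 0 \<in> {0..1}" using orbit_I[OF f0U, of j] pos by auto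
    show "eventually (\<lambda>f. (f ^^ j) 0 \<in> {0..1}) (Fl f0)"
      using ev1 by (rule eventually_mono) (use orbit_I in auto)
  qed
  have C: "((\<lambda>f. Dp f ((f ^^ j) 0)) \<longlongrightarrow> Dp f0 ((f0 ^^ j) 0)) (Fl f0)"
    using tendsto_add[OF A B] by simp
  have "((\<lambda>f. Dpw f ((f ^^ j) 0)) \<longlongrightarrow> Dp f0 ((f0 ^^ j) 0)) (Fl f0)"
  proof (subst tendsto_cong)
    show "eventually (\<lambda>f. Dpw f ((f ^^ j) 0) = Dp f ((f ^^ j) 0)) (Fl f0)"
      using ev1 by (rule eventually_mono) (simp add: Dpw_def)
  qed (rule C)
  then show ?thesis using pos by (simp add: Dpw_def)
qed

lemma Diter_tendsto:
  assumes np: "\<not> periodic_c f0"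
  shows "((\<lambda>f. Diter f i (f 0)) \<longlongrightarrow> Diter f0 i (f0 0)) (Fl f0)"
  unfolding Diter_alt
proof (rule tendsto_prod)
  fix j assume "j \<in> {..<i}"
  have "(f0 ^^ Suc j) 0 \<noteq> 0" using np unfolding periodic_c_def by blast
  then show "((\<lambda>f. Dpw f ((f ^^ Suc j) 0)) \<longlongrightarrow> Dpw f0 ((f0 ^^ Suc j) 0)) (Fl f0)"
    by (rule Dpw_tendsto)
qed

lemma unif_expand:
  obtains lam d where "lam > 1" "d > 0" "\<forall>y\<in>{-1..1}. \<bar>Dpw f0 y\<bar> \<ge> lam"
    "\<forall>f\<in>U1. NN f < d \<longrightarrow> (\<forall>y\<in>{-1..1}. \<bar>Dpw f y\<bar> \<ge> lam)"
proof -
  define a where "a = Inf (Dm f0 ` {-1..0})"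
  define b where "b = Sup (Dp f0 ` {0..1})"
  have a1: "a > 1" and b1: "b < -1" using f0U unfolding U1_def a_def b_def by auto
  have ha: "\<forall>y\<in>{-1..0}. Dm f0 y \<ge> a" unfolding a_def
    using Dm_props(2)[OF U1_B1[OF f0U]] by (auto intro!: cInf_lower bdd_b)
  have hb: "\<forall>y\<in>{0..1}. Dp f0 y \<le> b" unfolding b_def
    using Dp_props(2)[OF U1_B1[OF f0U]] by (auto intro!: cSup_upper bdd_a)
  define l0 where "l0 = min a (-b)"
  have l01: "l0 > 1" using a1 b1 by (simp add: l0_def)
  have la: "l0 \<le> a" "l0 \<le> -b" by (auto simp: l0_def)
  show ?thesis
  proof (rule that[of "(l0 + 1)/2" "(l0 - 1)/2"])
    show "(l0 + 1)/2 > 1" "(l0 - 1)/2 > 0" using l01 by auto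
    show "\<forall>y\<in>{-1..1}. \<bar>Dpw f0 y\<bar> \<ge> (l0 + 1)/2"
    proof
      fix y :: real assume y: "y \<in> {-1..1}"
      show "\<bar>Dpw f0 y\<bar> \<ge> (l0 + 1)/2"
      proof (cases "y \<le> 0")
        case True then have "Dm f0 y \<ge> a" using ha y by auto
        then show ?thesis using True l01 la unfolding Dpw_def by (simp; arith)
      next
        case False then have "Dp f0 y \<le> b" using hb y by auto
        then show ?thesis using False l01 la unfolding Dpw_def by (simp; arith)
      qed
    qed
    show "\<forall>f\<in>U1. NN f < (l0 - 1)/2 \<longrightarrow> (\<forall>y\<in>{-1..1}. \<bar>Dpw f y\<bar> \<ge> (l0 + 1)/2)"
    proof (intro ballI impI)
      fix f y assume f: "f \<in> U1" and n: "NN f < (l0 - 1)/2" and y: "y \<in> {-1..(1::real)}"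
      show "\<bar>Dpw f y\<bar> \<ge> (l0 + 1)/2"
      proof (cases "y \<le> 0")
        case True
        then have y': "y \<in> {-1..0}" using y by auto
        have "Dm f0 y \<ge> a" using ha y' by auto
        moreover have "\<bar>Dm f y - Dm f0 y\<bar> \<le> NN f"
          using norm1_boundm[OF B1_diff[OF U1_B1[OF f] U1_B1[OF f0U]] y'] Dm_diff[OF U1_B1[OF f] U1_B1[OF f0U] y']
          by simp
        ultimately show ?thesis using True n l01 la unfolding Dpw_def by (simp; arith)
      next
        case False
        then have y': "y \<in> {0..1}" using y by auto
        have "Dp f0 y \<le> b" using hb y' by auto
        moreover have "\<bar>Dp f y - Dp f0 y\<bar> \<le> NN f"
          using norm1_boundp[OF B1_diff[OF U1_B1[OF f] U1_B1[OF f0U]] y'] Dp_diff[OF U1_B1[OF f] U1_B1[OF f0U] y']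
          by simp
        ultimately show ?thesis using False n l01 la unfolding Dpw_def by (simp; arith)
      qed
    qed
  qed
qed

end


theorem proposition3p2:
  fixes f0 :: "real \<Rightarrow> real"
  assumes "f0 \<in> U1"
    and "\<not> periodic_c f0"
  shows "(\<forall>\<eta>>0. \<exists>\<delta>>0. \<forall>f\<in>U1. norm1 (\<lambda>x. f x - f0 x) < \<delta> \<longrightarrow>
            (\<forall>v\<in>B1. \<bar>J f v - J f0 v\<bar> \<le> \<eta> * norm1 v))
       \<and> (\<forall>v0\<in>B0. \<forall>\<epsilon>>0. \<exists>\<delta>>0. \<forall>f\<in>U1. norm1 (\<lambda>x. f x - f0 x) < \<delta> \<longrightarrow>
            \<bar>J f v0 - J f0 v0\<bar> < \<epsilon>)"
proof -
  note f0U = assms(1) and np = assms(2)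
  obtain lam d0 where lam: "lam > 1" "d0 > 0" "\<forall>y\<in>{-1..1}. \<bar>Dpw f0 y\<bar> \<ge> lam"
    "\<forall>f\<in>U1. norm1 (\<lambda>x. f x - f0 x) < d0 \<longrightarrow> (\<forall>y\<in>{-1..1}. \<bar>Dpw f y\<bar> \<ge> lam)"
    using unif_expand[OF f0U] by blast
  define r where "r = 1 / lam"
  have r: "0 \<le> r" "r < 1" "0 < r" using lam(1) by (auto simp: r_def)
  have Dne: "Diter f0 i (f0 0) \<noteq> 0" for i
    using Diter_bound[OF f0U _ lam(3), of i] lam(1) by (metis abs_zero linorder_not_le order_less_trans zero_less_one zero_less_power)
  define t :: "(real \<Rightarrow> real) \<Rightarrow> (real \<Rightarrow> real) \<Rightarrow> nat \<Rightarrow> real"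
    where "t f v i = v ((f ^^ i) 0) / Diter f i (f 0)" for f v i
  have Jt: "J f v = (if periodic_c f then (\<Sum>i<(LEAST n. n > 0 \<and> (f ^^ n) 0 = 0). t f v i) else suminf (t f v))" for f v
    unfolding J_eq t_def[abs_def] by simp
  have key: "eventually (\<lambda>f. f \<in> U1 \<and> norm1 (\<lambda>x. f x - f0 x) < d0 \<and> (\<forall>n\<in>{0<..<K}. (f ^^ n) 0 \<noteq> 0)) (Fl f0)" for K
  proof -
    have "eventually (\<lambda>f. f \<in> U1 \<and> norm1 (\<lambda>x. f x - f0 x) < d0) (Fl f0)"
      unfolding eventually_Fl using lam(2) by auto
    moreover have "eventually (\<lambda>f. \<forall>n\<in>{0<..<K}. (f ^^ n) 0 \<noteq> 0) (Fl f0)"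
    proof (rule eventually_ball_finite)
      show "finite {0<..<K}" by simp
      show "\<forall>n\<in>{0<..<K}. eventually (\<lambda>f. (f ^^ n) 0 \<noteq> 0) (Fl f0)"
      proof
        fix n assume "n \<in> {0<..<K}"
        then have "0 < n" by simp
        then have "(f0 ^^ n) 0 \<noteq> 0" using np unfolding periodic_c_def by blast
        then show "eventually (\<lambda>f. (f ^^ n) 0 \<noteq> 0) (Fl f0)"
          by (rule tendsto_imp_eventually_ne[OF orbit_tendsto[OF f0U]])
      qed
    qed
    ultimately show ?thesis by (rule eventually_conj[THEN eventually_mono]) auto
  qed
  have tailf: "\<bar>J f v - (\<Sum>i<K. t f v i)\<bar> \<le> M * r ^ K / (1 - r)"
    if f: "f \<in> U1" "norm1 (\<lambda>x. f x - f0 x) < d0" "\<forall>n\<in>{0<..<K}. (f ^^ n) 0 \<noteq> 0"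
      and vb: "\<forall>y\<in>{-1..1}. \<bar>v y\<bar> \<le> M" for f v M K
  proof (rule tail_J[OF _ r(1,2) Jt])
    show "\<forall>i. \<bar>t f v i\<bar> \<le> M * r ^ i"
      using term_bound[OF f(1) _ _ vb] lam f unfolding t_def r_def by auto
    show "periodic_c f \<longrightarrow> K \<le> (LEAST n. n > 0 \<and> (f ^^ n) 0 = 0)"
      using per_ge[of f K] f(3) by auto
  qed
  have tail0: "\<bar>J f0 v - (\<Sum>i<K. t f0 v i)\<bar> \<le> M * r ^ K / (1 - r)"
    if vb: "\<forall>y\<in>{-1..1}. \<bar>v y\<bar> \<le> M" for v M K
  proof (rule tail_J[OF _ r(1,2) Jt])
    show "\<forall>i. \<bar>t f0 v i\<bar> \<le> M * r ^ i"
      using term_bound[OF f0U _ _ vb] lam unfolding t_def r_def by auto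
    show "periodic_c f0 \<longrightarrow> K \<le> (LEAST n. n > 0 \<and> (f0 ^^ n) 0 = 0)" using np by simp
  qed
  have A: "\<forall>\<eta>>0. \<exists>\<delta>>0. \<forall>f\<in>U1. norm1 (\<lambda>x. f x - f0 x) < \<delta> \<longrightarrow>
            (\<forall>v\<in>B1. \<bar>J f v - J f0 v\<bar> \<le> \<eta> * norm1 v)"
  proof (intro allI impI)
    fix \<eta> :: real assume eta: "\<eta> > 0"
    obtain K where K: "r ^ K < \<eta> / 4 * (1 - r)"
      using real_arch_pow_inv[of "\<eta> / 4 * (1 - r)" r] eta r by auto
    have K2: "2 * (r ^ K / (1 - r)) \<le> \<eta> / 2" using K r by (simp add: field_simps)
    define e where "e i f = \<bar>(f ^^ i) 0 - (f0 ^^ i) 0\<bar> / \<bar>Diter f i (f 0)\<bar>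
        + \<bar>1 / Diter f i (f 0) - 1 / Diter f0 i (f0 0)\<bar>" for i f
    have lim1: "((\<lambda>f. e i f) \<longlongrightarrow> 0) (Fl f0)" for i
    proof -
      have 1: "((\<lambda>f. \<bar>(f ^^ i) 0 - (f0 ^^ i) 0\<bar> / \<bar>Diter f i (f 0)\<bar>) \<longlongrightarrow>
          \<bar>(f0 ^^ i) 0 - (f0 ^^ i) 0\<bar> / \<bar>Diter f0 i (f0 0)\<bar>) (Fl f0)"
        by (intro tendsto_intros orbit_tendsto[OF f0U] Diter_tendsto[OF f0U np]) (simp add: Dne)
      have 2: "((\<lambda>f. \<bar>1 / Diter f i (f 0) - 1 / Diter f0 i (f0 0)\<bar>) \<longlongrightarrow>
          \<bar>1 / Diter f0 i (f0 0) - 1 / Diter f0 i (f0 0)\<bar>) (Fl f0)"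
        by (intro tendsto_intros Diter_tendsto[OF f0U np]) (simp add: Dne)
      from tendsto_add[OF 1 2] show ?thesis by (simp add: e_def)
    qed
    have lim: "((\<lambda>f. \<Sum>i<K. e i f) \<longlongrightarrow> 0) (Fl f0)"
      using tendsto_sum[of "{..<K}" "\<lambda>i f. e i f" "\<lambda>i. 0", OF lim1] by simp
    have "eventually (\<lambda>f. (f \<in> U1 \<and> norm1 (\<lambda>x. f x - f0 x) < d0 \<and> (\<forall>n\<in>{0<..<K}. (f ^^ n) 0 \<noteq> 0))
          \<and> (\<Sum>i<K. e i f) < \<eta> / 2) (Fl f0)"
      using order_tendstoD(2)[OF lim, of "\<eta>/2"] eta by (intro eventually_conj[OF key]) auto
    then obtain \<delta> where \<delta>: "\<delta> > 0" and H: "\<forall>f\<in>U1. norm1 (\<lambda>x. f x - f0 x) < \<delta> \<longrightarrow>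
        (f \<in> U1 \<and> norm1 (\<lambda>x. f x - f0 x) < d0 \<and> (\<forall>n\<in>{0<..<K}. (f ^^ n) 0 \<noteq> 0)) \<and> (\<Sum>i<K. e i f) < \<eta> / 2"
      unfolding eventually_Fl by blast
    show "\<exists>\<delta>>0. \<forall>f\<in>U1. norm1 (\<lambda>x. f x - f0 x) < \<delta> \<longrightarrow> (\<forall>v\<in>B1. \<bar>J f v - J f0 v\<bar> \<le> \<eta> * norm1 v)"
    proof (intro exI[of _ \<delta>] conjI ballI impI)
      show "\<delta> > 0" by fact
      fix f v assume f: "f \<in> U1" and fd: "norm1 (\<lambda>x. f x - f0 x) < \<delta>" and v: "v \<in> B1"
      define M where "M = norm1 v"
      have vb: "\<forall>y\<in>{-1..1}. \<bar>v y\<bar> \<le> M" using norm1_bound0[OF v] by (simp add: M_def)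
      have M0: "M \<ge> 0" using vb by (metis abs_ge_zero atLeastAtMost_iff order_trans le_minus_one_simps(1) zero_le_one)
      from H f fd have fd0: "norm1 (\<lambda>x. f x - f0 x) < d0" and per: "\<forall>n\<in>{0<..<K}. (f ^^ n) 0 \<noteq> 0"
        and es: "(\<Sum>i<K. e i f) < \<eta> / 2" by auto
      have lf: "\<forall>y\<in>{-1..1}. \<bar>Dpw f y\<bar> \<ge> lam" using lam(4) f fd0 by auto
      have T1: "\<bar>J f v - (\<Sum>i<K. t f v i)\<bar> \<le> M * r ^ K / (1 - r)" by (rule tailf[OF f fd0 per vb])
      have T0: "\<bar>J f0 v - (\<Sum>i<K. t f0 v i)\<bar> \<le> M * r ^ K / (1 - r)" by (rule tail0[OF vb])
      have trm: "\<bar>t f v i - t f0 v i\<bar> \<le> M * e i f" for i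
      proof -
        define y where "y = (f ^^ i) 0"
        define y0 where "y0 = (f0 ^^ i) 0"
        define D where "D = Diter f i (f 0)"
        define D0 where "D0 = Diter f0 i (f0 0)"
        have y: "y \<in> {-1..1}" "y0 \<in> {-1..1}" unfolding y_def y0_def using orbit_I f f0U by auto
        have "\<bar>D\<bar> \<ge> lam ^ i" unfolding D_def by (rule Diter_bound[OF f _ lf]) (use lam in auto)
        then have Dn: "D \<noteq> 0" using lam(1)
          by (metis abs_zero linorder_not_le order_less_trans zero_less_one zero_less_power)
        have D0n: "D0 \<noteq> 0" unfolding D0_def by (rule Dne)
        have "t f v i - t f0 v i = (v y - v y0) / D + v y0 * (1 / D - 1 / D0)"
          unfolding t_def y_def y0_def D_def D0_def using Dn D0n unfolding D_def D0_def
          by (simp add: field_simps)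
        also have "\<bar>\<dots>\<bar> \<le> \<bar>v y - v y0\<bar> / \<bar>D\<bar> + \<bar>v y0\<bar> * \<bar>1 / D - 1 / D0\<bar>"
          by (metis abs_divide abs_mult abs_triangle_ineq)
        also have "\<dots> \<le> (M * \<bar>y - y0\<bar>) / \<bar>D\<bar> + M * \<bar>1 / D - 1 / D0\<bar>"
        proof (intro add_mono divide_right_mono mult_right_mono)
          show "\<bar>v y - v y0\<bar> \<le> M * \<bar>y - y0\<bar>" unfolding M_def by (rule lip_v[OF v y])
          show "\<bar>v y0\<bar> \<le> M" using vb y by auto
        qed auto
        also have "\<dots> = M * e i f" unfolding e_def y_def y0_def D_def D0_def by (simp add: algebra_simps)
        finally show ?thesis .
      qed
      have T2: "\<bar>(\<Sum>i<K. t f v i) - (\<Sum>i<K. t f0 v i)\<bar> \<le> M * (\<Sum>i<K. e i f)"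
      proof -
        have "\<bar>(\<Sum>i<K. t f v i) - (\<Sum>i<K. t f0 v i)\<bar> = \<bar>\<Sum>i<K. t f v i - t f0 v i\<bar>"
          by (simp add: sum_subtractf)
        also have "\<dots> \<le> (\<Sum>i<K. \<bar>t f v i - t f0 v i\<bar>)" by (rule sum_abs)
        also have "\<dots> \<le> (\<Sum>i<K. M * e i f)" by (rule sum_mono) (rule trm)
        also have "\<dots> = M * (\<Sum>i<K. e i f)" by (simp add: sum_distrib_left)
        finally show ?thesis .
      qed
      have "M * (\<Sum>i<K. e i f) \<le> M * (\<eta> / 2)" using es M0 by (intro mult_left_mono) auto
      moreover have "M * (2 * (r ^ K / (1 - r))) \<le> M * (\<eta> / 2)" using K2 M0 by (intro mult_left_mono) auto
      moreover have "M * (2 * (r ^ K / (1 - r))) = M * r ^ K / (1 - r) + M * r ^ K / (1 - r)" by simp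
      moreover have "M * \<eta> = M * (\<eta> / 2) + M * (\<eta> / 2)" by (simp add: algebra_simps)
      moreover have "\<bar>J f v - J f0 v\<bar> \<le> \<bar>J f v - (\<Sum>i<K. t f v i)\<bar> + \<bar>(\<Sum>i<K. t f v i) - (\<Sum>i<K. t f0 v i)\<bar>
          + \<bar>J f0 v - (\<Sum>i<K. t f0 v i)\<bar>" by arith
      ultimately have "\<bar>J f v - J f0 v\<bar> \<le> M * \<eta>" using T0 T1 T2 by linarith
      then show "\<bar>J f v - J f0 v\<bar> \<le> \<eta> * norm1 v" by (simp add: M_def mult.commute)
    qed
  qed
  have B: "\<forall>v0\<in>B0. \<forall>\<epsilon>>0. \<exists>\<delta>>0. \<forall>f\<in>U1. norm1 (\<lambda>x. f x - f0 x) < \<delta> \<longrightarrow>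
            \<bar>J f v0 - J f0 v0\<bar> < \<epsilon>"
  proof (intro ballI allI impI)
    fix v0 :: "real \<Rightarrow> real" and \<epsilon> :: real assume v0: "v0 \<in> B0" and eps: "\<epsilon> > 0"
    define C where "C = norm0 v0 + 1"
    have vb: "\<forall>y\<in>{-1..1}. \<bar>v0 y\<bar> \<le> C"
    proof
      fix y :: real assume "y \<in> {-1..1}"
      then have "\<bar>v0 y\<bar> \<le> norm0 v0" by (rule norm0_bound[OF v0])
      then show "\<bar>v0 y\<bar> \<le> C" by (simp add: C_def)
    qed
    have C0: "C > 0" using norm0_bound[OF v0, of 0] by (simp add: C_def)
    obtain K where K: "r ^ K < \<epsilon> / (4 * C) * (1 - r)"
      using real_arch_pow_inv[of "\<epsilon> / (4 * C) * (1 - r)" r] eps r C0 by auto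
    have K2: "2 * (C * r ^ K / (1 - r)) < \<epsilon> / 2" using K r C0 by (simp add: field_simps)
    have cv: "continuous_on {-1..1} v0" using v0 by (simp add: B0_def)
    have lim1: "((\<lambda>f. t f v0 i) \<longlongrightarrow> t f0 v0 i) (Fl f0)" for i
      unfolding t_def
    proof (rule tendsto_divide[OF _ Diter_tendsto[OF f0U np] Dne])
      show "((\<lambda>f. v0 ((f ^^ i) 0)) \<longlongrightarrow> v0 ((f0 ^^ i) 0)) (Fl f0)"
      proof (rule continuous_on_tendsto_compose[OF cv orbit_tendsto[OF f0U]])
        show "(f0 ^^ i) 0 \<in> {-1..1}" by (rule orbit_I[OF f0U])
        show "eventually (\<lambda>f. (f ^^ i) 0 \<in> {-1..1}) (Fl f0)"
          using ev_U1[OF f0U] by (rule eventually_mono) (rule orbit_I)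
      qed
    qed
    have lim: "((\<lambda>f. \<Sum>i<K. t f v0 i) \<longlongrightarrow> (\<Sum>i<K. t f0 v0 i)) (Fl f0)"
      by (rule tendsto_sum) (rule lim1)
    have "eventually (\<lambda>f. (f \<in> U1 \<and> norm1 (\<lambda>x. f x - f0 x) < d0 \<and> (\<forall>n\<in>{0<..<K}. (f ^^ n) 0 \<noteq> 0))
          \<and> dist (\<Sum>i<K. t f v0 i) (\<Sum>i<K. t f0 v0 i) < \<epsilon> / 2) (Fl f0)"
      using tendstoD[OF lim, of "\<epsilon>/2"] eps by (intro eventually_conj[OF key]) auto
    then obtain \<delta> where \<delta>: "\<delta> > 0" and H: "\<forall>f\<in>U1. norm1 (\<lambda>x. f x - f0 x) < \<delta> \<longrightarrow>
        (f \<in> U1 \<and> norm1 (\<lambda>x. f x - f0 x) < d0 \<and> (\<forall>n\<in>{0<..<K}. (f ^^ n) 0 \<noteq> 0))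
        \<and> dist (\<Sum>i<K. t f v0 i) (\<Sum>i<K. t f0 v0 i) < \<epsilon> / 2"
      unfolding eventually_Fl by blast
    show "\<exists>\<delta>>0. \<forall>f\<in>U1. norm1 (\<lambda>x. f x - f0 x) < \<delta> \<longrightarrow> \<bar>J f v0 - J f0 v0\<bar> < \<epsilon>"
    proof (intro exI[of _ \<delta>] conjI ballI impI)
      show "\<delta> > 0" by fact
      fix f assume f: "f \<in> U1" and fd: "norm1 (\<lambda>x. f x - f0 x) < \<delta>"
      from H f fd have fd0: "norm1 (\<lambda>x. f x - f0 x) < d0" and per: "\<forall>n\<in>{0<..<K}. (f ^^ n) 0 \<noteq> 0"
        and es: "\<bar>(\<Sum>i<K. t f v0 i) - (\<Sum>i<K. t f0 v0 i)\<bar> < \<epsilon> / 2" by (auto simp: dist_real_def)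
      have T1: "\<bar>J f v0 - (\<Sum>i<K. t f v0 i)\<bar> \<le> C * r ^ K / (1 - r)" by (rule tailf[OF f fd0 per vb])
      have T0: "\<bar>J f0 v0 - (\<Sum>i<K. t f0 v0 i)\<bar> \<le> C * r ^ K / (1 - r)" by (rule tail0[OF vb])
      have "\<bar>J f v0 - J f0 v0\<bar> \<le> \<bar>J f v0 - (\<Sum>i<K. t f v0 i)\<bar> + \<bar>(\<Sum>i<K. t f v0 i) - (\<Sum>i<K. t f0 v0 i)\<bar>
          + \<bar>J f0 v0 - (\<Sum>i<K. t f0 v0 i)\<bar>" by arith
      moreover have "2 * (C * r ^ K / (1 - r)) = C * r ^ K / (1 - r) + C * r ^ K / (1 - r)" by simp
      ultimately show "\<bar>J f v0 - J f0 v0\<bar> < \<epsilon>" using T0 T1 es K2 by linarith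
    qed
  qed
  from A B show ?thesis by blast
qed

end
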